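(* Let $p(L,M,D;\mu\to1)$ be a generative reasoning model, let $\alpha\in L$, and let $\Delta\subseteq L$ be finite with $[\![\Delta]\!]^{\max}=[\![\Delta]\!]_p^{\max}$. Then $p(\alpha\mid\Delta)=1$ if and only if $S\models\alpha$ for every cardinality-maximal consistent subset $S$ of $\Delta$.
   Context: Fix a multiset of data $\{d_1,\dots,d_K\}$ with $K\ge1$, and a propositional language $L$ over finitely many atoms, with set of models (truth assignments) $\mathcal M$. A function $m:\{d_1,\dots,d_K\}\to\mathcal M$ assigns to each datum the model it supports. The probability of a model $n$ is $p(n)=|\{k:m(d_k)=n\}|/K$. For $\mu\in(0,1)$ and $\alpha\in L$, set $p(\alpha\mid m)=\mu$ if $m$ satisfies $\alpha$ and $1-\mu$ otherwise. For finite $\Delta$, set $p(\Delta\mid m)=\prod_{\beta\in\Delta}p(\beta\mid m)$, which is $1$ for empty $\Delta$. In $p(L,M,D;\mu\to1)$, $$p(\alpha\mid\Delta)=\lim_{\mu\to1^-}\frac{\sum_{m}p(\alpha\mid m)p(\Delta\mid m)p(m)}{\sum_m p(\Delta\mid m)p(m)}.$$ Notation and definitions: - For $S\subseteq L$, $[\![S]\!]$ is the set of models satisfying every formula of $S$, and $[\![S]\!]_p=\{m\in[\![S]\!]:p(m)\neq0\}$. - $S\models\alpha$ means $[\![S]\!]\subseteq[\![\alpha]\!]$. - $S\subseteq\Delta$ is a maximal consistent subset if $[\![S]\!]\neq\emptyset$ and $[\![S\cup\{\beta\}]\!]=\emptyset$ for all $\beta\in\Delta\setminus S$; a cardinality-maximal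 consistent subset is one of maximum cardinality among these, and $MCS(\Delta)$ is the set of them. - Analogously, maximal possible subsets use $[\![\cdot]\!]_p$ in place of $[\![\cdot]\!]$, and $MPS(\Delta)$ is the set of those of maximum cardinality. - $[\![\Delta]\!]^{\max}=\bigcup_{S\in MCS(\Delta)}[\![S]\!]$ and $[\![\Delta]\!]_p^{\max}=\bigcup_{S\in MPS(\Delta)}[\![S]\!]_p$. *)

theory Defs
  imports Complex_Main
begin

datatype 'a form = Atom 'a | Top | Bot | Neg "'a form" | Conj "'a form" "'a form"
  | Disj "'a form" "'a form" | Impl "'a form" "'a form"

type_synonym 'a model = "'a \<Rightarrow> bool"

fun sat :: "'a model \<Rightarrow> 'a form \<Rightarrow> bool" where
  "sat v (Atom a) = v a"
| "sat v Top = True"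
| "sat v Bot = False"
| "sat v (Neg f) = (\<not> sat v f)"
| "sat v (Conj f g) = (sat v f \<and> sat v g)"
| "sat v (Disj f g) = (sat v f \<or> sat v g)"
| "sat v (Impl f g) = (sat v f \<longrightarrow> sat v g)"

definition mods :: "'a form set \<Rightarrow> 'a model set" where
  "mods S = {v. \<forall>\<beta>\<in>S. sat v \<beta>}"

definition entails :: "'a form set \<Rightarrow> 'a form \<Rightarrow> bool" where
  "entails S \<alpha> \<longleftrightarrow> mods S \<subseteq> {v. sat v \<alpha>}"

text \<open>Data d_1..d_K given as list ds (K = length ds), m maps data to models.\<close>
definition prob :: "'d list \<Rightarrow> ('d \<Rightarrow> 'a model) \<Rightarrow> 'a model \<Rightarrow> real" where
  "prob ds m n = real (card {k. k < length ds \<and> m (ds ! k) = n}) / real (length ds)"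

definition mods_p :: "'d list \<Rightarrow> ('d \<Rightarrow> 'a model) \<Rightarrow> 'a form set \<Rightarrow> 'a model set" where
  "mods_p ds m S = {v \<in> mods S. prob ds m v \<noteq> 0}"

definition max_consistent :: "'a form set \<Rightarrow> 'a form set \<Rightarrow> bool" where
  "max_consistent \<Delta> S \<longleftrightarrow> S \<subseteq> \<Delta> \<and> mods S \<noteq> {} \<and>
     (\<forall>\<beta>\<in>\<Delta> - S. mods (insert \<beta> S) = {})"

definition MCS :: "'a form set \<Rightarrow> 'a form set set" where
  "MCS \<Delta> = {S. max_consistent \<Delta> S \<and> (\<forall>S'. max_consistent \<Delta> S' \<longrightarrow> card S' \<le> card S)}"

definition max_possible :: "'d list \<Rightarrow> ('d \<Rightarrow> 'a model) \<Rightarrow> 'a form set \<Rightarrow> 'a form set \<Rightarrow> bool" where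
  "max_possible ds m \<Delta> S \<longleftrightarrow> S \<subseteq> \<Delta> \<and> mods_p ds m S \<noteq> {} \<and>
     (\<forall>\<beta>\<in>\<Delta> - S. mods_p ds m (insert \<beta> S) = {})"

definition MPS :: "'d list \<Rightarrow> ('d \<Rightarrow> 'a model) \<Rightarrow> 'a form set \<Rightarrow> 'a form set set" where
  "MPS ds m \<Delta> = {S. max_possible ds m \<Delta> S \<and>
      (\<forall>S'. max_possible ds m \<Delta> S' \<longrightarrow> card S' \<le> card S)}"

definition mods_max :: "'a form set \<Rightarrow> 'a model set" where
  "mods_max \<Delta> = (\<Union>S\<in>MCS \<Delta>. mods S)"

definition mods_p_max :: "'d list \<Rightarrow> ('d \<Rightarrow> 'a model) \<Rightarrow> 'a form set \<Rightarrow> 'a model set" where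
  "mods_p_max ds m \<Delta> = (\<Union>S\<in>MPS ds m \<Delta>. mods_p ds m S)"

definition lik :: "real \<Rightarrow> 'a form \<Rightarrow> 'a model \<Rightarrow> real" where
  "lik \<mu> \<alpha> v = (if sat v \<alpha> then \<mu> else 1 - \<mu>)"

definition lik_set :: "real \<Rightarrow> 'a form set \<Rightarrow> 'a model \<Rightarrow> real" where
  "lik_set \<mu> \<Delta> v = (\<Prod>\<beta>\<in>\<Delta>. lik \<mu> \<beta> v)"

definition cond_prob_mu :: "'d list \<Rightarrow> ('d \<Rightarrow> 'a::finite model) \<Rightarrow> real \<Rightarrow> 'a form \<Rightarrow> 'a form set \<Rightarrow> real" where
  "cond_prob_mu ds m \<mu> \<alpha> \<Delta> =
     (\<Sum>v\<in>UNIV. lik \<mu> \<alpha> v * lik_set \<mu> \<Delta> v * prob ds m v) /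
     (\<Sum>v\<in>UNIV. lik_set \<mu> \<Delta> v * prob ds m v)"

definition cond_prob :: "'d list \<Rightarrow> ('d \<Rightarrow> 'a::finite model) \<Rightarrow> 'a form \<Rightarrow> 'a form set \<Rightarrow> real" where
  "cond_prob ds m \<alpha> \<Delta> = Lim (at_left 1) (\<lambda>\<mu>. cond_prob_mu ds m \<mu> \<alpha> \<Delta>)"

end

theory Submission
  imports Defs
begin

lemma prob_nonneg: "0 \<le> prob ds m v"
  by (simp add: prob_def)

lemma prob_ne0: "length ds \<ge> 1 \<Longrightarrow> prob ds m (m (ds!0)) \<noteq> 0"
proof -
  assume a: "length ds \<ge> 1"
  have "0 \<in> {k. k < length ds \<and> m (ds ! k) = m (ds!0)}" using a by auto
  moreover have "finite {k. k < length ds \<and> m (ds ! k) = m (ds!0)}" by simp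
  ultimately have "card {k. k < length ds \<and> m (ds ! k) = m (ds!0)} \<noteq> 0"
    using card_gt_0_iff by fastforce
  moreover have "real (length ds) \<noteq> 0" using a by (cases ds) auto
  ultimately show ?thesis by (simp add: prob_def)
qed

lemma lik_set_eq:
  assumes "finite \<Delta>"
  shows "lik_set \<mu> \<Delta> v = \<mu> ^ card {\<beta>\<in>\<Delta>. sat v \<beta>} * (1-\<mu>)^(card \<Delta> - card {\<beta>\<in>\<Delta>. sat v \<beta>})"
proof -
  have "lik_set \<mu> \<Delta> v = (\<Prod>\<beta>\<in>\<Delta> \<inter> {x. sat v x}. \<mu>) * (\<Prod>\<beta>\<in>\<Delta> \<inter> - {x. sat v x}. 1 - \<mu>)"
    unfolding lik_set_def lik_def by (rule prod.If_cases[OF assms])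
  also have "\<Delta> \<inter> {x. sat v x} = {\<beta>\<in>\<Delta>. sat v \<beta>}" by auto
  also have "\<Delta> \<inter> - {x. sat v x} = \<Delta> - {\<beta>\<in>\<Delta>. sat v \<beta>}" by auto
  finally have e: "lik_set \<mu> \<Delta> v = (\<Prod>\<beta>\<in>{\<beta>\<in>\<Delta>. sat v \<beta>}. \<mu>) * (\<Prod>\<beta>\<in>\<Delta> - {\<beta>\<in>\<Delta>. sat v \<beta>}. 1 - \<mu>)" .
  have "card (\<Delta> - {\<beta>\<in>\<Delta>. sat v \<beta>}) = card \<Delta> - card {\<beta>\<in>\<Delta>. sat v \<beta>}"
    using assms by (intro card_Diff_subset) auto
  then show ?thesis unfolding e by simp
qed

lemma mods_p_max_eq:
  fixes m :: "'d \<Rightarrow> ('a::finite \<Rightarrow> bool)"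
  assumes fin: "finite \<Delta>" and K: "length ds \<ge> 1"
  defines "s \<equiv> \<lambda>v. card {\<beta>\<in>\<Delta>. sat v \<beta>}"
  defines "ss \<equiv> Max (s ` {v. prob ds m v \<noteq> 0})"
  shows "mods_p_max ds m \<Delta> = {v. prob ds m v \<noteq> 0 \<and> s v = ss}"
proof -
  let ?P = "{v. prob ds m v \<noteq> 0}"
  have finP: "finite ?P" by simp
  have sle: "\<And>v. prob ds m v \<noteq> 0 \<Longrightarrow> s v \<le> ss"
    unfolding ss_def using finP by (intro Max_ge) auto
  define Sv where "Sv = (\<lambda>v. {\<beta>\<in>\<Delta>. sat v \<beta>})"
  have cardSv: "card (Sv v) = s v" for v by (simp add: Sv_def s_def)
  have poss_le: "card S \<le> ss" if "S \<subseteq> \<Delta>" "mods_p ds m S \<noteq> {}" for S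
  proof -
    from that(2) obtain w where w: "w \<in> mods_p ds m S" by auto
    hence "S \<subseteq> Sv w" "prob ds m w \<noteq> 0" using that(1)
      by (auto simp: mods_p_def mods_def Sv_def)
    hence "card S \<le> s w" using fin unfolding cardSv[symmetric] Sv_def
      by (intro card_mono) auto
    thus ?thesis using sle[OF \<open>prob ds m w \<noteq> 0\<close>] by simp
  qed
  have Svmp: "max_possible ds m \<Delta> (Sv v)" if "prob ds m v \<noteq> 0" "s v = ss" for v
    unfolding max_possible_def
  proof (intro conjI ballI)
    show "Sv v \<subseteq> \<Delta>" by (auto simp: Sv_def)
    show "mods_p ds m (Sv v) \<noteq> {}" using that(1)
      by (auto simp: mods_p_def mods_def Sv_def)
    fix \<beta> assume b: "\<beta> \<in> \<Delta> - Sv v"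
    show "mods_p ds m (insert \<beta> (Sv v)) = {}"
    proof (rule ccontr)
      assume "mods_p ds m (insert \<beta> (Sv v)) \<noteq> {}"
      hence "card (insert \<beta> (Sv v)) \<le> ss" using b by (intro poss_le) (auto simp: Sv_def)
      moreover have "card (insert \<beta> (Sv v)) = Suc (s v)"
        using b fin cardSv by (simp add: Sv_def)
      ultimately show False using that(2) by simp
    qed
  qed
  have MPSc: "S \<in> MPS ds m \<Delta> \<longleftrightarrow> max_possible ds m \<Delta> S \<and> card S = ss" for S
  proof -
    obtain v0 where v0: "prob ds m v0 \<noteq> 0" "s v0 = ss"
    proof -
      have "ss \<in> s ` ?P" unfolding ss_def using finP prob_ne0[OF K]
        by (intro Max_in) auto
      thus ?thesis using that by auto
    qed
    have "\<And>S'. max_possible ds m \<Delta> S' \<Longrightarrow> card S' \<le> ss"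
      by (rule poss_le) (auto simp: max_possible_def)
    moreover have "card (Sv v0) = ss" using v0 cardSv by simp
    ultimately show ?thesis unfolding MPS_def using Svmp[OF v0]
      by (intro iffI; simp) (smt (verit) le_antisym)
  qed
  show ?thesis
  proof (intro set_eqI iffI)
    fix v assume "v \<in> mods_p_max ds m \<Delta>"
    then obtain S where S: "S \<in> MPS ds m \<Delta>" "v \<in> mods_p ds m S"
      unfolding mods_p_max_def by auto
    hence p: "prob ds m v \<noteq> 0" and "S \<subseteq> Sv v" and c: "card S = ss"
      using MPSc by (auto simp: mods_p_def mods_def Sv_def max_possible_def MPS_def)
    hence "card S \<le> s v" using fin unfolding cardSv[symmetric] Sv_def
      by (intro card_mono) auto
    thus "v \<in> {v. prob ds m v \<noteq> 0 \<and> s v = ss}" using sle[OF p] c p by simp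
  next
    fix v assume "v \<in> {v. prob ds m v \<noteq> 0 \<and> s v = ss}"
    hence v: "prob ds m v \<noteq> 0" "s v = ss" by auto
    have "Sv v \<in> MPS ds m \<Delta>" using MPSc Svmp[OF v] cardSv v by simp
    moreover have "v \<in> mods_p ds m (Sv v)" using v(1)
      by (auto simp: mods_p_def mods_def Sv_def)
    ultimately show "v \<in> mods_p_max ds m \<Delta>" unfolding mods_p_max_def by auto
  qed
qed

lemma lik_tendsto: "((\<lambda>\<mu>. lik \<mu> \<alpha> v) \<longlongrightarrow> lik 1 \<alpha> v) (at_left (1::real))"
  by (cases "sat v \<alpha>") (auto simp: lik_def intro!: tendsto_eq_intros)

lemma limit_lemma:
  fixes m :: "'d \<Rightarrow> ('a::finite \<Rightarrow> bool)"
  assumes fin: "finite \<Delta>" and K: "length ds \<ge> 1"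
  defines "s \<equiv> \<lambda>v. card {\<beta>\<in>\<Delta>. sat v \<beta>}"
  defines "ss \<equiv> Max (s ` {v. prob ds m v \<noteq> 0})"
  defines "T \<equiv> {v. prob ds m v \<noteq> 0 \<and> s v = ss}"
  shows "((\<lambda>\<mu>. cond_prob_mu ds m \<mu> \<alpha> \<Delta>) \<longlongrightarrow>
           (\<Sum>v\<in>T. lik 1 \<alpha> v * prob ds m v) / (\<Sum>v\<in>T. prob ds m v)) (at_left 1)"
    and "T \<noteq> {}"
proof -
  let ?P = "{v. prob ds m v \<noteq> 0}"
  have finP: "finite ?P" by simp
  have sle: "\<And>v. prob ds m v \<noteq> 0 \<Longrightarrow> s v \<le> ss"
    unfolding ss_def using finP by (intro Max_ge) auto
  have "ss \<in> s ` ?P" unfolding ss_def using finP prob_ne0[OF K]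
    by (intro Max_in) auto
  then obtain v0 where v0: "prob ds m v0 \<noteq> 0" "s v0 = ss" by auto
  define n where "n = card \<Delta>"
  have sn: "s v \<le> n" for v unfolding s_def n_def using fin by (intro card_mono) auto
  have ssn: "ss \<le> n" using sn v0 by metis
  define g where "g = (\<lambda>(\<mu>::real) v. if prob ds m v = 0 then 0 else \<mu>^(s v) * (1-\<mu>)^(ss - s v))"
  have key: "lik_set \<mu> \<Delta> v * prob ds m v = (1-\<mu>)^(n-ss) * (prob ds m v * g \<mu> v)" for \<mu> v
  proof (cases "prob ds m v = 0")
    case True thus ?thesis by (simp add: g_def)
  next
    case False
    hence "s v \<le> ss" by (rule sle)
    hence "n - s v = (n - ss) + (ss - s v)" using ssn by simp
    moreover have "lik_set \<mu> \<Delta> v = \<mu>^(s v) * (1-\<mu>)^(n - s v)"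
      using lik_set_eq[OF fin] by (simp add: s_def n_def)
    ultimately show ?thesis using False
      unfolding g_def by (simp add: power_add)
  qed
  have ev: "eventually (\<lambda>\<mu>. cond_prob_mu ds m \<mu> \<alpha> \<Delta> =
      (\<Sum>v\<in>UNIV. lik \<mu> \<alpha> v * (prob ds m v * g \<mu> v)) / (\<Sum>v\<in>UNIV. prob ds m v * g \<mu> v)) (at_left (1::real))"
  proof (rule eventually_mono[OF eventually_at_left_real[of 0]])
    fix \<mu> :: real assume "\<mu> \<in> {0<..<1}"
    hence c: "(1-\<mu>)^(n-ss) \<noteq> 0" by simp
    have "cond_prob_mu ds m \<mu> \<alpha> \<Delta> =
      ((1-\<mu>)^(n-ss) * (\<Sum>v\<in>UNIV. lik \<mu> \<alpha> v * (prob ds m v * g \<mu> v))) /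
      ((1-\<mu>)^(n-ss) * (\<Sum>v\<in>UNIV. prob ds m v * g \<mu> v))"
      unfolding cond_prob_mu_def sum_distrib_left
      by (simp add: mult.assoc key mult.left_commute)
    also have "\<dots> = (\<Sum>v\<in>UNIV. lik \<mu> \<alpha> v * (prob ds m v * g \<mu> v)) / (\<Sum>v\<in>UNIV. prob ds m v * g \<mu> v)"
      by (rule mult_divide_mult_cancel_left[OF c])
    finally show "cond_prob_mu ds m \<mu> \<alpha> \<Delta> =
      (\<Sum>v\<in>UNIV. lik \<mu> \<alpha> v * (prob ds m v * g \<mu> v)) / (\<Sum>v\<in>UNIV. prob ds m v * g \<mu> v)" .
  qed simp
  have g1: "g 1 v = (if v \<in> T then 1 else 0)" for v
    using sle[of v] by (auto simp: g_def T_def)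
  have gt: "((\<lambda>\<mu>. g \<mu> v) \<longlongrightarrow> g 1 v) (at_left 1)" for v
    unfolding g_def by (cases "prob ds m v = 0") (auto intro!: tendsto_eq_intros)
  have B: "(\<Sum>v\<in>UNIV. prob ds m v * g 1 v) = (\<Sum>v\<in>T. prob ds m v)"
    unfolding g1 by (simp add: sum.inter_restrict[symmetric] if_distrib cong: if_cong)
  have A: "(\<Sum>v\<in>UNIV. lik 1 \<alpha> v * (prob ds m v * g 1 v)) = (\<Sum>v\<in>T. lik 1 \<alpha> v * prob ds m v)"
    unfolding g1 by (simp add: sum.inter_restrict[symmetric] if_distrib cong: if_cong)
  have "v0 \<in> T" using v0 by (simp add: T_def)
  thus "T \<noteq> {}" by auto
  have "prob ds m v0 \<le> (\<Sum>v\<in>T. prob ds m v)"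
    using \<open>v0 \<in> T\<close> by (intro member_le_sum) (auto simp: prob_nonneg T_def)
  hence Bpos: "(\<Sum>v\<in>T. prob ds m v) \<noteq> 0" using v0 prob_nonneg[of ds m v0] by linarith
  have "((\<lambda>\<mu>. (\<Sum>v\<in>UNIV. lik \<mu> \<alpha> v * (prob ds m v * g \<mu> v)) / (\<Sum>v\<in>UNIV. prob ds m v * g \<mu> v))
        \<longlongrightarrow> (\<Sum>v\<in>UNIV. lik 1 \<alpha> v * (prob ds m v * g 1 v)) / (\<Sum>v\<in>UNIV. prob ds m v * g 1 v)) (at_left 1)"
    using Bpos B
    by (intro tendsto_divide tendsto_sum tendsto_mult lik_tendsto gt tendsto_const) auto
  thus "((\<lambda>\<mu>. cond_prob_mu ds m \<mu> \<alpha> \<Delta>) \<longlongrightarrow>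
           (\<Sum>v\<in>T. lik 1 \<alpha> v * prob ds m v) / (\<Sum>v\<in>T. prob ds m v)) (at_left 1)"
    unfolding A B using tendsto_cong[OF ev] by simp
qed

theorem corollary3:
  fixes ds :: "'d list" and m :: "'d \<Rightarrow> ('a::finite \<Rightarrow> bool)"
    and \<alpha> :: "'a form" and \<Delta> :: "'a form set"
  assumes "length ds \<ge> 1"
    and "finite \<Delta>"
    and "mods_max \<Delta> = mods_p_max ds m \<Delta>"
  shows "cond_prob ds m \<alpha> \<Delta> = 1 \<longleftrightarrow> (\<forall>S\<in>MCS \<Delta>. entails S \<alpha>)"
proof -
  define s where "s \<equiv> \<lambda>v. card {\<beta>\<in>\<Delta>. sat v \<beta>}"
  define ss where "ss \<equiv> Max (s ` {v. prob ds m v \<noteq> 0})"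
  define T where "T \<equiv> {v. prob ds m v \<noteq> 0 \<and> s v = ss}"
  have lim: "((\<lambda>\<mu>. cond_prob_mu ds m \<mu> \<alpha> \<Delta>) \<longlongrightarrow>
           (\<Sum>v\<in>T. lik 1 \<alpha> v * prob ds m v) / (\<Sum>v\<in>T. prob ds m v)) (at_left 1)"
    and Tne: "T \<noteq> {}"
    using limit_lemma[OF assms(2,1)] unfolding s_def ss_def T_def by auto
  have cp: "cond_prob ds m \<alpha> \<Delta> = (\<Sum>v\<in>T. lik 1 \<alpha> v * prob ds m v) / (\<Sum>v\<in>T. prob ds m v)"
    unfolding cond_prob_def by (rule tendsto_Lim[OF trivial_limit_at_left_real lim])
  from Tne obtain v0 where "v0 \<in> T" by auto
  have "prob ds m v0 \<le> (\<Sum>v\<in>T. prob ds m v)"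
    using \<open>v0 \<in> T\<close> by (intro member_le_sum) (auto simp: prob_nonneg T_def)
  hence Bpos: "(\<Sum>v\<in>T. prob ds m v) \<noteq> 0" using \<open>v0 \<in> T\<close> prob_nonneg[of ds m v0]
    by (auto simp: T_def)
  have "cond_prob ds m \<alpha> \<Delta> = 1 \<longleftrightarrow>
        (\<Sum>v\<in>T. lik 1 \<alpha> v * prob ds m v) = (\<Sum>v\<in>T. prob ds m v)"
    unfolding cp using Bpos by (simp only: divide_eq_1_iff) simp
  also have "\<dots> \<longleftrightarrow> (\<Sum>v\<in>T. (1 - lik 1 \<alpha> v) * prob ds m v) = 0"
    unfolding left_diff_distrib sum_subtractf mult_1_left by argo
  also have "\<dots> \<longleftrightarrow> (\<forall>v\<in>T. (1 - lik 1 \<alpha> v) * prob ds m v = 0)"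
    by (rule sum_nonneg_eq_0_iff) (auto simp: lik_def prob_nonneg)
  also have "\<dots> \<longleftrightarrow> (\<forall>v\<in>T. sat v \<alpha>)"
    by (auto simp: lik_def T_def)
  also have "T = mods_max \<Delta>"
    unfolding assms(3) T_def s_def ss_def by (rule mods_p_max_eq[OF assms(2,1), symmetric])
  also have "(\<forall>v\<in>mods_max \<Delta>. sat v \<alpha>) \<longleftrightarrow> (\<forall>S\<in>MCS \<Delta>. entails S \<alpha>)"
    unfolding mods_max_def entails_def by blast
  finally show ?thesis .
qed

end
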